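(* Let $A_S$ be a parabolic-retractable Artin group with Coxeter matrix $(m_{s,t})_{s,t\in S}$, and let $a,b,c\in S$ be pairwise distinct. If $m_{a,b}$ and $m_{a,c}$ are odd, then $m_{b,c}$ is also odd.
   Context: A Coxeter matrix over a finite set $S$ is a matrix $M=(m_{s,t})_{s,t\in S}$ with entries in $\mathbb{N}\cup\{\infty\}$, $m_{s,s}=1$, and $m_{s,t}=m_{t,s}\ge 2$ for $s\neq t$. Write $\Pi(s,t,m)$ for the alternating word $sts\cdots$ of length $m$. The Artin group is $A_S=\langle S\mid \Pi(s,t,m_{s,t})=\Pi(t,s,m_{s,t})$ for $s\neq t$, $m_{s,t}\neq\infty\rangle$. For $X\subseteq S$, $A_X$ is the subgroup generated by $X$. A retraction of $G$ onto a subgroup $H$ is a homomorphism $\varphi:G\to H$ with $\varphi|_H=\mathrm{id}_H$. $A_S$ is parabolic-retractable if it admits a retraction onto $A_X$ for every $X\subseteq S$. "Odd" means a finite odd integer ($\infty$ is not odd). *)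

theory Defs
  imports "HOL-Library.Extended_Nat" "HOL-Algebra.Generated_Groups"
begin

definition coxeter_matrix :: "'a set \<Rightarrow> ('a \<Rightarrow> 'a \<Rightarrow> enat) \<Rightarrow> bool" where
  "coxeter_matrix S M \<longleftrightarrow>
     (\<forall>s\<in>S. M s s = 1) \<and>
     (\<forall>s\<in>S. \<forall>t\<in>S. M s t = M t s) \<and>
     (\<forall>s\<in>S. \<forall>t\<in>S. s \<noteq> t \<longrightarrow> M s t \<ge> 2)"

definition odd_entry :: "enat \<Rightarrow> bool" where
  "odd_entry m \<longleftrightarrow> (\<exists>k::nat. m = enat k \<and> odd k)"

text \<open>Words in the generators and their inverses: (s, True) is s, (s, False) is s^-1.\<close>
definition words :: "'a set \<Rightarrow> ('a \<times> bool) list set" where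
  "words S = lists (S \<times> UNIV)"

definition alt_word :: "'a \<Rightarrow> 'a \<Rightarrow> nat \<Rightarrow> ('a \<times> bool) list" where
  "alt_word s t m = map (\<lambda>i. (if even i then s else t, True)) [0..<m]"

inductive artin_eq :: "'a set \<Rightarrow> ('a \<Rightarrow> 'a \<Rightarrow> enat) \<Rightarrow> ('a \<times> bool) list \<Rightarrow> ('a \<times> bool) list \<Rightarrow> bool"
  for S M where
  refl: "w \<in> words S \<Longrightarrow> artin_eq S M w w"
| sym: "artin_eq S M w v \<Longrightarrow> artin_eq S M v w"
| trans: "artin_eq S M u v \<Longrightarrow> artin_eq S M v w \<Longrightarrow> artin_eq S M u w"
| cancel: "u \<in> words S \<Longrightarrow> v \<in> words S \<Longrightarrow> s \<in> S \<Longrightarrow>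
     artin_eq S M (u @ [(s, e), (s, \<not> e)] @ v) (u @ v)"
| braid: "u \<in> words S \<Longrightarrow> v \<in> words S \<Longrightarrow> s \<in> S \<Longrightarrow> t \<in> S \<Longrightarrow> s \<noteq> t \<Longrightarrow>
     M s t = enat m \<Longrightarrow>
     artin_eq S M (u @ alt_word s t m @ v) (u @ alt_word t s m @ v)"

definition artin_class :: "'a set \<Rightarrow> ('a \<Rightarrow> 'a \<Rightarrow> enat) \<Rightarrow> ('a \<times> bool) list \<Rightarrow> ('a \<times> bool) list set" where
  "artin_class S M w = {v. artin_eq S M w v}"

definition artin_group :: "'a set \<Rightarrow> ('a \<Rightarrow> 'a \<Rightarrow> enat) \<Rightarrow> ('a \<times> bool) list set monoid" where
  "artin_group S M =
     \<lparr> carrier = artin_class S M ` words S,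
       mult = (\<lambda>A B. \<Union>{artin_class S M (a @ b) | a b. a \<in> A \<and> b \<in> B}),
       one = artin_class S M [] \<rparr>"

definition parabolic :: "'a set \<Rightarrow> ('a \<Rightarrow> 'a \<Rightarrow> enat) \<Rightarrow> 'a set \<Rightarrow> ('a \<times> bool) list set set" where
  "parabolic S M X = generate (artin_group S M) ((\<lambda>x. artin_class S M [(x, True)]) ` X)"

definition retraction_onto :: "'g monoid \<Rightarrow> 'g set \<Rightarrow> ('g \<Rightarrow> 'g) \<Rightarrow> bool" where
  "retraction_onto G H \<phi> \<longleftrightarrow> \<phi> \<in> hom G (G\<lparr>carrier := H\<rparr>) \<and> (\<forall>h\<in>H. \<phi> h = h)"

definition parabolic_retractable :: "'a set \<Rightarrow> ('a \<Rightarrow> 'a \<Rightarrow> enat) \<Rightarrow> bool" where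
  "parabolic_retractable S M \<longleftrightarrow>
     (\<forall>X\<subseteq>S. \<exists>\<phi>. retraction_onto (artin_group S M) (parabolic S M X) \<phi>)"

end

theory Submission
  imports Defs Complex_Main
begin

lemma words_append[simp]: "u @ v \<in> words S \<longleftrightarrow> u \<in> words S \<and> v \<in> words S"
  by (auto simp: words_def)

lemma words_Cons[simp]: "x # v \<in> words S \<longleftrightarrow> fst x \<in> S \<and> v \<in> words S"
  by (cases x) (auto simp: words_def)

lemma words_Nil[simp]: "[] \<in> words S"
  by (auto simp: words_def)

lemma alt_word_Suc: "alt_word s t (Suc n) = (s, True) # alt_word t s n"
proof -
  have "map (\<lambda>i. (if even i then s else t, True)) [0..<Suc n]
      = map (\<lambda>i. (if even i then s else t, True)) (0 # map Suc [0..<n])"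
    by (simp add: map_Suc_upt upt_conv_Cons del: upt_Suc)
  thus ?thesis by (simp add: alt_word_def comp_def)
qed

lemma alt_word_words: "s \<in> S \<Longrightarrow> t \<in> S \<Longrightarrow> alt_word s t n \<in> words S"
  by (induction n arbitrary: s t) (auto simp: alt_word_Suc alt_word_def)

lemma artin_eq_words: "artin_eq S M w v \<Longrightarrow> w \<in> words S \<and> v \<in> words S"
  by (induction rule: artin_eq.induct) (auto simp: alt_word_words)

lemma artin_eq_cong: "artin_eq S M w v \<Longrightarrow> x \<in> words S \<Longrightarrow> y \<in> words S
   \<Longrightarrow> artin_eq S M (x @ w @ y) (x @ v @ y)"
proof (induction rule: artin_eq.induct)
  case (refl w) thus ?case by (auto intro: artin_eq.refl)
next
  case (sym w v) thus ?case by (auto intro: artin_eq.sym)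
next
  case (trans u v w) thus ?case by (blast intro: artin_eq.trans)
next
  case (cancel u v s e)
  have "artin_eq S M ((x @ u) @ [(s, e), (s, \<not> e)] @ (v @ y)) ((x @ u) @ (v @ y))"
    using cancel by (intro artin_eq.cancel) auto
  thus ?case by simp
next
  case (braid u v s t m)
  have "artin_eq S M ((x @ u) @ alt_word s t m @ (v @ y)) ((x @ u) @ alt_word t s m @ (v @ y))"
    using braid by (intro artin_eq.braid) auto
  thus ?case by simp
qed

lemma artin_eq_congL: "artin_eq S M w v \<Longrightarrow> y \<in> words S \<Longrightarrow> artin_eq S M (w @ y) (v @ y)"
  using artin_eq_cong[of S M w v "[]" y] by simp

lemma artin_eq_congR: "artin_eq S M w v \<Longrightarrow> x \<in> words S \<Longrightarrow> artin_eq S M (x @ w) (x @ v)"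
  using artin_eq_cong[of S M w v x "[]"] by simp

lemma class_eq_iff: "w \<in> words S \<Longrightarrow> artin_class S M w = artin_class S M v \<longleftrightarrow> artin_eq S M w v"
  unfolding artin_class_def
  by (auto intro: artin_eq.refl artin_eq.sym artin_eq.trans)

lemma class_mem_self: "w \<in> words S \<Longrightarrow> w \<in> artin_class S M w"
  by (auto simp: artin_class_def intro: artin_eq.refl)

lemma mult_class:
  assumes "u \<in> words S" "v \<in> words S"
  shows "artin_class S M u \<otimes>\<^bsub>artin_group S M\<^esub> artin_class S M v = artin_class S M (u @ v)"
proof -
  have "artin_class S M (a @ b) = artin_class S M (u @ v)"
    if "a \<in> artin_class S M u" "b \<in> artin_class S M v" for a b
  proof -
    have ea: "artin_eq S M u a" and eb: "artin_eq S M v b" using that by (auto simp: artin_class_def)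
    have "artin_eq S M (u @ v) (a @ v)" using artin_eq_congL[OF ea assms(2)] .
    moreover have "artin_eq S M (a @ v) (a @ b)"
      using artin_eq_congR[OF eb] artin_eq_words[OF ea] by blast
    ultimately have "artin_eq S M (u @ v) (a @ b)" by (rule artin_eq.trans)
    thus ?thesis using assms by (subst eq_commute, subst class_eq_iff) auto
  qed
  moreover have "u \<in> artin_class S M u" "v \<in> artin_class S M v" using assms by (auto intro: class_mem_self)
  ultimately have "{artin_class S M (a @ b) | a b. a \<in> artin_class S M u \<and> b \<in> artin_class S M v}
     = {artin_class S M (u @ v)}" by blast
  thus ?thesis by (simp add: artin_group_def)
qed


datatype m2 = M2 real real real real

fun mm :: "m2 \<Rightarrow> m2 \<Rightarrow> m2" where
  "mm (M2 a b c d) (M2 e f g h) = M2 (a*e+b*g) (a*f+b*h) (c*e+d*g) (c*f+d*h)"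

fun app :: "m2 \<Rightarrow> real \<times> real \<Rightarrow> real \<times> real" where
  "app (M2 a b c d) (x, y) = (a*x+b*y, c*x+d*y)"

definition I2 :: m2 where "I2 = M2 1 0 0 1"

lemma app_mm: "app (mm A B) v = app A (app B v)"
  by (cases A; cases B; cases v) (simp add: algebra_simps)

lemma app_I2[simp]: "app I2 v = v"
  by (cases v) (simp add: I2_def)

lemma mm_assoc: "mm (mm A B) C = mm A (mm B C)"
  by (cases A; cases B; cases C) (simp add: algebra_simps)

lemma mm_I2[simp]: "mm I2 A = A" "mm A I2 = A"
  by (cases A; simp add: I2_def)+

fun altm :: "m2 \<Rightarrow> m2 \<Rightarrow> nat \<Rightarrow> m2" where
  "altm X Y 0 = I2"
| "altm X Y (Suc n) = mm X (altm Y X n)"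

fun powm :: "m2 \<Rightarrow> nat \<Rightarrow> m2" where
  "powm A 0 = I2"
| "powm A (Suc n) = mm A (powm A n)"

lemma altm_even: "altm X Y (2*k) = powm (mm X Y) k"
  by (induction k) (simp_all add: mm_assoc)

lemma altm_odd: "altm X Y (2*k+1) = mm (powm (mm X Y) k) X"
proof (induction k)
  case 0 thus ?case by simp
next
  case (Suc k)
  have "altm X Y (2*Suc k+1) = mm X (mm Y (altm X Y (2*k+1)))" by (simp add: mm_assoc)
  also have "\<dots> = mm (mm X Y) (mm (powm (mm X Y) k) X)" using Suc by (simp add: mm_assoc)
  finally show ?case by (simp add: mm_assoc)
qed

definition Ls :: "real \<Rightarrow> m2" where "Ls \<beta> = M2 (-1) (-2*\<beta>) 0 1"
definition Lt :: "real \<Rightarrow> m2" where "Lt \<beta> = M2 1 0 (-2*\<beta>) (-1)"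

lemma altm_zero_beta: "even m \<Longrightarrow> altm (Ls 0) (Lt 0) m = altm (Lt 0) (Ls 0) m"
proof -
  assume "even m" then obtain k where "m = 2*k" by auto
  moreover have "mm (Ls 0) (Lt 0) = mm (Lt 0) (Ls 0)" by (simp add: Ls_def Lt_def)
  ultimately show ?thesis by (simp add: altm_even)
qed

fun cheb :: "real \<Rightarrow> nat \<Rightarrow> real" where
  "cheb \<tau> 0 = 0"
| "cheb \<tau> (Suc 0) = 1"
| "cheb \<tau> (Suc (Suc n)) = \<tau> * cheb \<tau> (Suc n) - cheb \<tau> n"

lemma powm_closed:
  assumes "mm A A = M2 (\<tau>*a - 1) (\<tau>*b) (\<tau>*c) (\<tau>*d - 1)" and "A = M2 a b c d"
  shows "powm A (Suc k) = M2 (cheb \<tau> (Suc k) * a - cheb \<tau> k) (cheb \<tau> (Suc k) * b)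
            (cheb \<tau> (Suc k) * c) (cheb \<tau> (Suc k) * d - cheb \<tau> k)"
proof (induction k)
  case 0 thus ?case using assms by (simp add: I2_def)
next
  case (Suc k)
  have E: "a*a+b*c = \<tau>*a - 1" "a*b+b*d = \<tau>*b" "c*a+d*c = \<tau>*c" "c*b+d*d = \<tau>*d - 1"
    using assms by simp_all
  define x where "x = cheb \<tau> (Suc k)"
  define y where "y = cheb \<tau> k"
  have z: "cheb \<tau> (Suc (Suc k)) = \<tau> * x - y" by (simp add: x_def y_def)
  have "powm A (Suc (Suc k)) = mm A (powm A (Suc k))" by (simp only: powm.simps)
  also have "\<dots> = mm (M2 a b c d) (M2 (x * a - y) (x * b) (x * c) (x * d - y))"
    by (subst Suc.IH) (simp only: assms(2) x_def y_def)
  also have "\<dots> = M2 ((\<tau> * x - y) * a - x) ((\<tau> * x - y) * b) ((\<tau> * x - y) * c) ((\<tau> * x - y) * d - x)"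
  proof -
    have 1: "a * (x * a - y) + b * (x * c) = (\<tau> * x - y) * a - x" using E by algebra
    have 2: "a * (x * b) + b * (x * d - y) = (\<tau> * x - y) * b" using E by algebra
    have 3: "c * (x * a - y) + d * (x * c) = (\<tau> * x - y) * c" using E by algebra
    have 4: "c * (x * b) + d * (x * d - y) = (\<tau> * x - y) * d - x" using E by algebra
    show ?thesis by (simp only: mm.simps 1 2 3 4)
  qed
  finally show ?case by (simp only: z x_def)
qed

lemma cheb_sin:
  assumes "sin \<phi> \<noteq> 0"
  shows "cheb (2 * cos \<phi>) n * sin \<phi> = sin (real n * \<phi>) \<and>
         cheb (2 * cos \<phi>) (Suc n) * sin \<phi> = sin (real (Suc n) * \<phi>)"
proof (induction n)
  case 0 thus ?case by simp
next
  case (Suc n)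
  have "sin (real (Suc (Suc n)) * \<phi>) + sin (real n * \<phi>) = 2 * cos \<phi> * sin (real (Suc n) * \<phi>)"
  proof -
    have a: "real (Suc (Suc n)) * \<phi> = real (Suc n) * \<phi> + \<phi>" by (simp add: algebra_simps)
    have b: "real n * \<phi> = real (Suc n) * \<phi> - \<phi>" by (simp add: algebra_simps)
    show ?thesis unfolding a b sin_add sin_diff by (simp add: algebra_simps)
  qed
  thus ?case using Suc by (simp add: algebra_simps)
qed

lemma cheb_key:
  fixes j :: nat
  defines "\<theta> \<equiv> pi / real (2*j+3)"
  shows "cheb (4 * cos \<theta> ^ 2 - 2) (Suc j) * (4 * cos \<theta> ^ 2 - 1) = cheb (4 * cos \<theta> ^ 2 - 2) j"
proof -
  define \<phi> where "\<phi> = 2 * \<theta>"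
  have tau: "4 * cos \<theta> ^ 2 - 2 = 2 * cos \<phi>" unfolding \<phi>_def cos_double_cos by simp
  have pos: "0 < \<phi>" unfolding \<phi>_def \<theta>_def by (intro mult_pos_pos divide_pos_pos) auto
  have lt: "\<phi> < pi"
  proof -
    have d: "(2::real) < real (2*j+3)" by simp
    have "pi * 2 < pi * real (2*j+3)" using mult_strict_left_mono[OF d pi_gt_zero] .
    moreover have "\<phi> = (2*pi) / real (2*j+3)" unfolding \<phi>_def \<theta>_def by simp
    moreover have "0 < real (2*j+3)" by simp
    ultimately show ?thesis by (simp add: pos_divide_less_eq mult.commute)
  qed
  have sn: "sin \<phi> \<noteq> 0" using sin_gt_zero[OF pos lt] by simp
  define x where "x = cheb (2 * cos \<phi>) (Suc j)"
  define y where "y = cheb (2 * cos \<phi>) j"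
  have hx: "x * sin \<phi> = sin (real (Suc j) * \<phi>)" using cheb_sin[OF sn, of j] x_def by simp
  have hy: "y * sin \<phi> = sin (real j * \<phi>)" using cheb_sin[OF sn, of j] y_def by simp
  have hz: "(2 * cos \<phi> * x - y) * sin \<phi> = sin (real (Suc (Suc j)) * \<phi>)"
    using cheb_sin[OF sn, of "Suc j"] x_def y_def by simp
  have tp: "real (Suc (Suc j)) * \<phi> = 2 * pi - real (Suc j) * \<phi>"
    unfolding \<phi>_def \<theta>_def by (simp add: field_simps)
  have "sin (real (Suc (Suc j)) * \<phi>) = - sin (real (Suc j) * \<phi>)" unfolding tp by simp
  hence "(x * (2 * cos \<phi> + 1)) * sin \<phi> = y * sin \<phi>"
    using hx hy hz by (simp add: algebra_simps)
  hence "x * (2 * cos \<phi> + 1) = y" using sn by simp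
  moreover have tau2: "4 * cos \<theta> ^ 2 - 1 = 2 * cos \<phi> + 1" using tau by simp
  ultimately show ?thesis unfolding tau tau2 x_def y_def by simp
qed

lemma altm_odd_beta:
  fixes j :: nat
  defines "\<beta> \<equiv> cos (pi / real (2*j+3))"
  shows "altm (Ls \<beta>) (Lt \<beta>) (2*j+3) = altm (Lt \<beta>) (Ls \<beta>) (2*j+3)"
proof -
  define \<tau> where "\<tau> = 4 * \<beta>^2 - 2"
  have key: "cheb \<tau> (Suc j) * (4 * \<beta> ^ 2 - 1) = cheb \<tau> j"
    unfolding \<tau>_def \<beta>_def by (rule cheb_key)
  have A: "mm (Ls \<beta>) (Lt \<beta>) = M2 (4*\<beta>^2-1) (2*\<beta>) (-2*\<beta>) (-1)"
    by (simp add: Ls_def Lt_def power2_eq_square)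
  have B: "mm (Lt \<beta>) (Ls \<beta>) = M2 (-1) (-2*\<beta>) (2*\<beta>) (4*\<beta>^2-1)"
    by (simp add: Ls_def Lt_def power2_eq_square)
  have AA: "mm (M2 (4*\<beta>^2-1) (2*\<beta>) (-2*\<beta>) (-1)) (M2 (4*\<beta>^2-1) (2*\<beta>) (-2*\<beta>) (-1))
     = M2 (\<tau>*(4*\<beta>^2-1) - 1) (\<tau>*(2*\<beta>)) (\<tau>*(-2*\<beta>)) (\<tau>*(-1) - 1)"
    unfolding \<tau>_def by (simp add: algebra_simps power2_eq_square)
  have BB: "mm (M2 (-1) (-2*\<beta>) (2*\<beta>) (4*\<beta>^2-1)) (M2 (-1) (-2*\<beta>) (2*\<beta>) (4*\<beta>^2-1))
     = M2 (\<tau>*(-1) - 1) (\<tau>*(-2*\<beta>)) (\<tau>*(2*\<beta>)) (\<tau>*(4*\<beta>^2-1) - 1)"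
    unfolding \<tau>_def by (simp add: algebra_simps power2_eq_square)
  have m: "2*j+3 = 2*Suc j + 1" by simp
  define x where "x = cheb \<tau> (Suc j)"
  define y where "y = cheb \<tau> j"
  have PA: "powm (mm (Ls \<beta>) (Lt \<beta>)) (Suc j) = M2 (x * (4*\<beta>^2-1) - y) (x * (2*\<beta>)) (x * (-2*\<beta>)) (x * (-1) - y)"
    unfolding A x_def y_def by (rule powm_closed[OF AA HOL.refl])
  have PB: "powm (mm (Lt \<beta>) (Ls \<beta>)) (Suc j) = M2 (x * (-1) - y) (x * (-2*\<beta>)) (x * (2*\<beta>)) (x * (4*\<beta>^2-1) - y)"
    unfolding B x_def y_def by (rule powm_closed[OF BB HOL.refl])
  have k: "x * (4 * \<beta> ^ 2 - 1) = y" using key x_def y_def by simp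
  show ?thesis unfolding m altm_odd PA PB
    by (simp add: Ls_def Lt_def k[symmetric] algebra_simps power2_eq_square)
qed


definition beta :: "('a \<Rightarrow> 'a \<Rightarrow> enat) \<Rightarrow> 'a \<Rightarrow> 'a \<Rightarrow> real" where
  "beta M s t = (case M s t of enat m \<Rightarrow> if odd m then cos (pi / real m) else 0 | \<infinity> \<Rightarrow> 0)"

definition rmap :: "'a set \<Rightarrow> ('a \<Rightarrow> 'a \<Rightarrow> enat) \<Rightarrow> 'a \<Rightarrow> ('a \<Rightarrow> real) \<Rightarrow> ('a \<Rightarrow> real)" where
  "rmap S M s v = v(s := - v s - 2 * (\<Sum>u\<in>S-{s}. beta M s u * v u))"

fun Ev :: "'a set \<Rightarrow> ('a \<Rightarrow> 'a \<Rightarrow> enat) \<Rightarrow> ('a \<times> bool) list \<Rightarrow> ('a \<Rightarrow> real) \<Rightarrow> ('a \<Rightarrow> real)" where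
  "Ev S M [] v = v"
| "Ev S M (l # w) v = rmap S M (fst l) (Ev S M w v)"

lemma Ev_append: "Ev S M (u @ w) v = Ev S M u (Ev S M w v)"
  by (induction u) auto

lemma rmap_invol: "rmap S M s (rmap S M s v) = v"
proof -
  have "(\<Sum>u\<in>S-{s}. beta M s u * rmap S M s v u) = (\<Sum>u\<in>S-{s}. beta M s u * v u)"
    by (rule sum.cong) (auto simp: rmap_def)
  thus ?thesis by (auto simp: rmap_def fun_eq_iff)
qed

lemma alt_word_0: "alt_word s t 0 = []"
  by (simp add: alt_word_def)

definition matw :: "real \<Rightarrow> 'a \<Rightarrow> ('a \<times> bool) list \<Rightarrow> m2" where
  "matw \<beta> s w = foldr (\<lambda>l A. mm (if fst l = s then Ls \<beta> else Lt \<beta>) A) w I2"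

lemma matw_alt:
  assumes "s \<noteq> t"
  shows "matw \<beta> s (alt_word s t n) = altm (Ls \<beta>) (Lt \<beta>) n \<and> matw \<beta> s (alt_word t s n) = altm (Lt \<beta>) (Ls \<beta>) n"
  using assms by (induction n) (auto simp: alt_word_Suc matw_def alt_word_0)

lemma alt_word_lists: "alt_word s t n \<in> lists ({s,t} \<times> UNIV)"
  by (auto simp: alt_word_def)

locale pairctx =
  fixes S :: "'a set" and M :: "'a \<Rightarrow> 'a \<Rightarrow> enat" and s t :: 'a and \<beta> :: real
  assumes fin: "finite S" and sS: "s \<in> S" and tS: "t \<in> S" and st: "s \<noteq> t"
    and bst: "beta M s t = \<beta>" and bts: "beta M t s = \<beta>" and nd: "1 - \<beta>^2 \<noteq> 0"
begin

definition Rs where "Rs v = (\<Sum>u\<in>S-{s,t}. beta M s u * v u)"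
definition Rt where "Rt v = (\<Sum>u\<in>S-{s,t}. beta M t u * v u)"
definition ps where "ps v = (- Rs v + \<beta> * Rt v) / (1 - \<beta>^2)"
definition pt where "pt v = (- Rt v + \<beta> * Rs v) / (1 - \<beta>^2)"
definition Phi where "Phi v y = v(s := ps v + fst y, t := pt v + snd y)"

lemma ps_eq: "ps v + \<beta> * pt v = - Rs v"
proof -
  have "ps v + \<beta> * pt v = ((- Rs v + \<beta> * Rt v) + \<beta> * (- Rt v + \<beta> * Rs v)) / (1 - \<beta>^2)"
    unfolding ps_def pt_def by (simp add: add_divide_distrib)
  also have "\<dots> = (- Rs v * (1 - \<beta>^2)) / (1 - \<beta>^2)"
    by (rule arg_cong[where f="\<lambda>x. x / (1 - \<beta>^2)"]) (simp add: algebra_simps power2_eq_square)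
  also have "\<dots> = - Rs v" using nd by simp
  finally show ?thesis .
qed
lemma pt_eq: "pt v + \<beta> * ps v = - Rt v"
proof -
  have "pt v + \<beta> * ps v = ((- Rt v + \<beta> * Rs v) + \<beta> * (- Rs v + \<beta> * Rt v)) / (1 - \<beta>^2)"
    unfolding ps_def pt_def by (simp add: add_divide_distrib)
  also have "\<dots> = (- Rt v * (1 - \<beta>^2)) / (1 - \<beta>^2)"
    by (rule arg_cong[where f="\<lambda>x. x / (1 - \<beta>^2)"]) (simp add: algebra_simps power2_eq_square)
  also have "\<dots> = - Rt v" using nd by simp
  finally show ?thesis .
qed

lemma sum_s: "(\<Sum>u\<in>S-{s}. beta M s u * Phi v y u) = \<beta> * (pt v + snd y) + Rs v"
proof -
  have e: "S - {s} = insert t (S - {s,t})" using tS st by auto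
  have "(\<Sum>u\<in>S-{s,t}. beta M s u * Phi v y u) = Rs v"
    unfolding Rs_def by (rule sum.cong) (auto simp: Phi_def)
  thus ?thesis unfolding e using fin st by (simp add: Phi_def bst)
qed

lemma sum_t: "(\<Sum>u\<in>S-{t}. beta M t u * Phi v y u) = \<beta> * (ps v + fst y) + Rt v"
proof -
  have e: "S - {t} = insert s (S - {s,t})" using sS st by auto
  have "(\<Sum>u\<in>S-{s,t}. beta M t u * Phi v y u) = Rt v"
    unfolding Rt_def by (rule sum.cong) (auto simp: Phi_def)
  thus ?thesis unfolding e using fin st by (simp add: Phi_def bts)
qed

lemma rmap_s: "rmap S M s (Phi v y) = Phi v (app (Ls \<beta>) y)"
proof -
  obtain y1 y2 where y: "y = (y1, y2)" by fastforce
  have "- (ps v + y1) - 2 * (\<beta> * (pt v + y2) + Rs v) = ps v + (- y1 - 2 * \<beta> * y2)"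
    using ps_eq[of v] by (simp add: algebra_simps)
  thus ?thesis using st unfolding rmap_def sum_s
    by (auto simp: Phi_def y Ls_def fun_eq_iff)
qed

lemma rmap_t: "rmap S M t (Phi v y) = Phi v (app (Lt \<beta>) y)"
proof -
  obtain y1 y2 where y: "y = (y1, y2)" by fastforce
  have "- (pt v + y2) - 2 * (\<beta> * (ps v + y1) + Rt v) = pt v + (- 2 * \<beta> * y1 - y2)"
    using pt_eq[of v] by (simp add: algebra_simps)
  thus ?thesis using st unfolding rmap_def sum_t
    by (auto simp: Phi_def y Lt_def fun_eq_iff)
qed

lemma Ev_Phi: "w \<in> lists ({s,t} \<times> UNIV) \<Longrightarrow> Ev S M w (Phi v y) = Phi v (app (matw \<beta> s w) y)"
proof (induction w)
  case Nil thus ?case by (simp add: matw_def)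
next
  case (Cons l w)
  have IH: "Ev S M w (Phi v y) = Phi v (app (matw \<beta> s w) y)" using Cons by auto
  have "fst l = s \<or> fst l = t" using Cons.prems by auto
  thus ?case
  proof
    assume "fst l = s" thus ?thesis using IH by (simp add: rmap_s matw_def app_mm)
  next
    assume "fst l = t" thus ?thesis using IH st by (simp add: rmap_t matw_def app_mm)
  qed
qed

lemma Phi_self: "Phi v (v s - ps v, v t - pt v) = v"
  by (auto simp: Phi_def fun_eq_iff)

lemma braid_transfer:
  assumes "altm (Ls \<beta>) (Lt \<beta>) m = altm (Lt \<beta>) (Ls \<beta>) m"
  shows "Ev S M (alt_word s t m) v = Ev S M (alt_word t s m) v"
proof -
  define y where "y = (v s - ps v, v t - pt v)"
  have l1: "alt_word s t m \<in> lists ({s,t} \<times> UNIV)" by (rule alt_word_lists)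
  have l2: "alt_word t s m \<in> lists ({s,t} \<times> UNIV)" using alt_word_lists[of t s m] by (simp add: insert_commute)
  have "Ev S M (alt_word s t m) v = Ev S M (alt_word s t m) (Phi v y)" by (simp add: y_def Phi_self)
  also have "\<dots> = Phi v (app (matw \<beta> s (alt_word s t m)) y)" by (rule Ev_Phi[OF l1])
  also have "\<dots> = Phi v (app (matw \<beta> s (alt_word t s m)) y)" using matw_alt[OF st] assms by simp
  also have "\<dots> = Ev S M (alt_word t s m) (Phi v y)" by (rule Ev_Phi[OF l2, symmetric])
  also have "\<dots> = Ev S M (alt_word t s m) v" by (simp add: y_def Phi_self)
  finally show ?thesis .
qed

end


lemma beta_sym: "coxeter_matrix S M \<Longrightarrow> s \<in> S \<Longrightarrow> t \<in> S \<Longrightarrow> beta M s t = beta M t s"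
  by (simp add: beta_def coxeter_matrix_def)

lemma braid_Ev:
  assumes fin: "finite S" and cox: "coxeter_matrix S M" and sS: "s \<in> S" and tS: "t \<in> S"
    and st: "s \<noteq> t" and m: "M s t = enat m"
  shows "Ev S M (alt_word s t m) v = Ev S M (alt_word t s m) v"
proof -
  have "M s t \<ge> 2" using cox sS tS st by (auto simp: coxeter_matrix_def)
  hence m2: "m \<ge> 2" using m by (simp add: numeral_eq_enat)
  define \<beta> where "\<beta> = beta M s t"
  have bts: "beta M t s = \<beta>" using beta_sym[OF cox sS tS] \<beta>_def by simp
  show ?thesis
  proof (cases "odd m")
    case True
    define j where "j = (m - 3) div 2"
    have j: "m = 2*j+3" using True m2 unfolding j_def by presburger
    have b: "\<beta> = cos (pi / real (2*j+3))" using m True j by (simp add: \<beta>_def beta_def)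
    have pos: "0 < pi / real (2*j+3)" by (intro divide_pos_pos) auto
    have lt: "pi / real (2*j+3) < pi"
    proof -
      have d: "(1::real) < real (2*j+3)" by simp
      have "pi * 1 < pi * real (2*j+3)" using mult_strict_left_mono[OF d pi_gt_zero] .
      thus ?thesis by (simp add: pos_divide_less_eq)
    qed
    have "0 < sin (pi / real (2*j+3))" using sin_gt_zero[OF pos lt] .
    hence "0 < sin (pi / real (2*j+3)) ^ 2" by simp
    moreover have "1 - \<beta>^2 = sin (pi / real (2*j+3)) ^ 2" unfolding b by (simp add: sin_squared_eq)
    ultimately have "1 - \<beta>^2 \<noteq> 0" by simp
    then interpret pairctx S M s t \<beta>
      using fin sS tS st \<beta>_def bts by unfold_locales auto
    show ?thesis using braid_transfer altm_odd_beta b j by simp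
  next
    case False
    have b: "\<beta> = 0" using m False by (simp add: \<beta>_def beta_def)
    interpret pairctx S M s t \<beta>
      using fin sS tS st \<beta>_def bts b by unfold_locales auto
    show ?thesis using braid_transfer altm_zero_beta False b by simp
  qed
qed

lemma Ev_artin:
  assumes "artin_eq S M w w'" and fin: "finite S" and cox: "coxeter_matrix S M"
  shows "Ev S M w v = Ev S M w' v"
  using assms(1)
proof (induction arbitrary: v rule: artin_eq.induct)
  case (cancel u v' s e)
  thus ?case by (simp add: Ev_append rmap_invol)
next
  case (braid u v' s t m)
  thus ?case using braid_Ev[OF fin cox braid.hyps(3-6)] by (simp add: Ev_append)
qed auto

definition cnt :: "'a \<Rightarrow> ('a \<times> bool) list \<Rightarrow> nat" where
  "cnt b w = length (filter (\<lambda>l. fst l = b) w)"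

lemma cnt_Nil[simp]: "cnt b [] = 0" by (simp add: cnt_def)
lemma cnt_Cons: "cnt b (l # w) = (if fst l = b then Suc (cnt b w) else cnt b w)" by (simp add: cnt_def)
lemma cnt_append[simp]: "cnt b (u @ w) = cnt b u + cnt b w" by (simp add: cnt_def)

lemma rmap_b: "rmap S M b (\<lambda>u. if u = b then x else 0) = (\<lambda>u. if u = b then - x else 0)"
proof -
  have "(\<Sum>u\<in>S-{b}. beta M b u * (if u = b then x else 0)) = 0"
    by (rule sum.neutral) auto
  thus ?thesis by (auto simp: rmap_def fun_eq_iff)
qed

lemma rmap_c: "c \<noteq> b \<Longrightarrow> beta M c b = 0 \<Longrightarrow>
   rmap S M c (\<lambda>u. if u = b then x else 0) = (\<lambda>u. if u = b then x else 0)"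
proof -
  assume cb: "c \<noteq> b" "beta M c b = 0"
  have "(\<Sum>u\<in>S-{c}. beta M c u * (if u = b then x else 0)) = 0"
    by (rule sum.neutral) (auto simp: cb)
  thus ?thesis using cb by (auto simp: rmap_def fun_eq_iff)
qed

lemma Ev_b:
  assumes "c \<noteq> b" "beta M c b = 0"
  shows "w \<in> lists ({b,c} \<times> UNIV) \<Longrightarrow>
    Ev S M w (\<lambda>u. if u = b then 1 else 0) = (\<lambda>u. if u = b then (-1)^(cnt b w) else 0)"
proof (induction w)
  case Nil
  have "cnt b [] = 0" by (simp add: cnt_def)
  thus ?case by (simp add: fun_eq_iff)
next
  case (Cons l w)
  have IH: "Ev S M w (\<lambda>u. if u = b then 1 else 0) = (\<lambda>u. if u = b then (-1)^(cnt b w) else 0)"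
    using Cons by auto
  have "fst l = b \<or> fst l = c" using Cons.prems by auto
  thus ?case
  proof
    assume h: "fst l = b"
    hence c: "cnt b (l # w) = Suc (cnt b w)" by (simp add: cnt_Cons)
    have "Ev S M (l # w) (\<lambda>u. if u = b then 1 else 0) = rmap S M b (Ev S M w (\<lambda>u. if u = b then 1 else 0))"
      using h by simp
    also have "\<dots> = (\<lambda>u. if u = b then - ((- 1) ^ cnt b w) else 0)" using IH rmap_b by simp
    also have "\<dots> = (\<lambda>u. if u = b then (- 1) ^ cnt b (l # w) else 0)"
      unfolding c power_Suc by (rule ext) simp
    finally show ?thesis .
  next
    assume h: "fst l = c"
    hence c: "cnt b (l # w) = cnt b w" using assms by (simp add: cnt_Cons)
    have "Ev S M (l # w) (\<lambda>u. if u = b then 1 else 0) = rmap S M c (Ev S M w (\<lambda>u. if u = b then 1 else 0))"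
      using h by simp
    also have "\<dots> = (\<lambda>u. if u = b then (- 1) ^ cnt b w else 0)" using IH rmap_c[OF assms] by simp
    also have "\<dots> = (\<lambda>u. if u = b then (- 1) ^ cnt b (l # w) else 0)" unfolding c by simp
    finally show ?thesis .
  qed
qed


definition winv :: "('a \<times> bool) list \<Rightarrow> ('a \<times> bool) list" where
  "winv w = rev (map (\<lambda>(s, e). (s, \<not> e)) w)"

lemma winv_words: "w \<in> words S \<Longrightarrow> winv w \<in> words S"
  by (auto simp: winv_def words_def)

lemma winv_Cons: "winv ((s, e) # w) = winv w @ [(s, \<not> e)]"
  by (simp add: winv_def)

lemma winv_cancel: "w \<in> words S \<Longrightarrow> artin_eq S M (winv w @ w) []"
proof (induction w)
  case Nil thus ?case by (simp add: winv_def artin_eq.refl)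
next
  case (Cons l w)
  obtain s e where l: "l = (s, e)" by fastforce
  have sS: "s \<in> S" and w: "w \<in> words S" using Cons.prems l by auto
  have "artin_eq S M (winv w @ [(s, \<not> e), (s, \<not> \<not> e)] @ w) (winv w @ w)"
    by (rule artin_eq.cancel) (auto simp: sS w winv_words)
  hence "artin_eq S M (winv (l # w) @ l # w) (winv w @ w)" by (simp add: l winv_Cons)
  thus ?case using Cons.IH[OF w] by (rule artin_eq.trans)
qed

lemma carrier_G: "carrier (artin_group S M) = artin_class S M ` words S"
  by (simp add: artin_group_def)

lemma one_G: "\<one>\<^bsub>artin_group S M\<^esub> = artin_class S M []"
  by (simp add: artin_group_def)

lemma group_G: "group (artin_group S M)"
proof (rule groupI)
  fix x y assume "x \<in> carrier (artin_group S M)" "y \<in> carrier (artin_group S M)"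
  then obtain u v where "u \<in> words S" "v \<in> words S" "x = artin_class S M u" "y = artin_class S M v"
    by (auto simp: carrier_G)
  thus "x \<otimes>\<^bsub>artin_group S M\<^esub> y \<in> carrier (artin_group S M)" by (simp add: mult_class carrier_G)
next
  show "\<one>\<^bsub>artin_group S M\<^esub> \<in> carrier (artin_group S M)" by (simp add: carrier_G one_G)
next
  fix x y z assume "x \<in> carrier (artin_group S M)" "y \<in> carrier (artin_group S M)" "z \<in> carrier (artin_group S M)"
  then obtain u v w where "u \<in> words S" "v \<in> words S" "w \<in> words S"
    "x = artin_class S M u" "y = artin_class S M v" "z = artin_class S M w"
    by (auto simp: carrier_G)
  thus "x \<otimes>\<^bsub>artin_group S M\<^esub> y \<otimes>\<^bsub>artin_group S M\<^esub> z = x \<otimes>\<^bsub>artin_group S M\<^esub> (y \<otimes>\<^bsub>artin_group S M\<^esub> z)"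
    by (simp add: mult_class)
next
  fix x assume "x \<in> carrier (artin_group S M)"
  then obtain u where u: "u \<in> words S" "x = artin_class S M u" by (auto simp: carrier_G)
  thus "\<one>\<^bsub>artin_group S M\<^esub> \<otimes>\<^bsub>artin_group S M\<^esub> x = x"
    using mult_class[of "[]" S u M] by (simp add: one_G)
next
  fix x assume "x \<in> carrier (artin_group S M)"
  then obtain u where u: "u \<in> words S" "x = artin_class S M u" by (auto simp: carrier_G)
  have "artin_class S M (winv u) \<otimes>\<^bsub>artin_group S M\<^esub> x = artin_class S M []"
    using u mult_class[of "winv u" S u M] winv_cancel[OF u(1), of M] winv_words[OF u(1)]
    by (simp add: class_eq_iff)
  moreover have "artin_class S M (winv u) \<in> carrier (artin_group S M)"
    using winv_words[OF u(1)] by (simp add: carrier_G)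
  ultimately show "\<exists>y\<in>carrier (artin_group S M). y \<otimes>\<^bsub>artin_group S M\<^esub> x = \<one>\<^bsub>artin_group S M\<^esub>"
    by (auto simp: one_G)
qed

lemma inv_gen:
  assumes "s \<in> S"
  shows "inv\<^bsub>artin_group S M\<^esub> (artin_class S M [(s, True)]) = artin_class S M [(s, False)]"
proof (rule group.inv_equality[OF group_G])
  have "artin_eq S M ([] @ [(s, False), (s, \<not> False)] @ []) ([] @ [])"
    by (rule artin_eq.cancel) (auto simp: assms)
  hence "artin_class S M [(s, False), (s, True)] = artin_class S M []"
    using assms by (simp add: class_eq_iff)
  thus "artin_class S M [(s, False)] \<otimes>\<^bsub>artin_group S M\<^esub> artin_class S M [(s, True)] = \<one>\<^bsub>artin_group S M\<^esub>"
    using assms mult_class[of "[(s, False)]" S "[(s, True)]" M] by (simp add: one_G)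
  show "artin_class S M [(s, True)] \<in> carrier (artin_group S M)"
    using assms by (simp add: carrier_G)
  show "artin_class S M [(s, False)] \<in> carrier (artin_group S M)"
    using assms by (simp add: carrier_G)
qed

lemma gen_char:
  assumes "X \<subseteq> S"
  shows "h \<in> generate (artin_group S M) ((\<lambda>x. artin_class S M [(x, True)]) ` X) \<Longrightarrow>
    \<exists>w \<in> lists (X \<times> UNIV). h = artin_class S M w"
proof (induction rule: generate.induct)
  case one thus ?case by (auto simp: one_G intro: bexI[of _ "[]"])
next
  case (incl h)
  then obtain x where "x \<in> X" "h = artin_class S M [(x, True)]" by auto
  thus ?case by (intro bexI[of _ "[(x, True)]"]) auto
next
  case (inv h)
  then obtain x where x: "x \<in> X" "h = artin_class S M [(x, True)]" by auto
  hence "inv\<^bsub>artin_group S M\<^esub> h = artin_class S M [(x, False)]" using assms inv_gen[of x S M] by auto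
  thus ?case using x by (intro bexI[of _ "[(x, False)]"]) auto
next
  case (eng h1 h2)
  then obtain w1 w2 where w: "w1 \<in> lists (X \<times> UNIV)" "w2 \<in> lists (X \<times> UNIV)"
    "h1 = artin_class S M w1" "h2 = artin_class S M w2" by auto
  have "w1 \<in> words S" "w2 \<in> words S" using w assms by (auto simp: words_def)
  hence "h1 \<otimes>\<^bsub>artin_group S M\<^esub> h2 = artin_class S M (w1 @ w2)" using w mult_class by simp
  thus ?case using w by (intro bexI[of _ "w1 @ w2"]) auto
qed

fun altc :: "('a \<times> bool) list \<Rightarrow> ('a \<times> bool) list \<Rightarrow> nat \<Rightarrow> ('a \<times> bool) list" where
  "altc x y 0 = []"
| "altc x y (Suc n) = x @ altc y x n"

lemma altc_lists: "x \<in> lists A \<Longrightarrow> y \<in> lists A \<Longrightarrow> altc x y n \<in> lists A"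
  by (induction n arbitrary: x y) auto

lemma altc_words: "x \<in> words S \<Longrightarrow> y \<in> words S \<Longrightarrow> altc x y n \<in> words S"
  unfolding words_def by (rule altc_lists)

lemma cnt_altc_even: "cnt b (altc x y (2*k)) = k * (cnt b x + cnt b y)"
proof (induction k)
  case 0 thus ?case by simp
next
  case (Suc k)
  have "altc x y (2 * Suc k) = x @ y @ altc x y (2*k)" by (simp add: numeral_2_eq_2)
  thus ?case using Suc by simp
qed

lemma cnt_altc_odd: "cnt b (altc x y (2*k+1)) = cnt b x + k * (cnt b x + cnt b y)"
  using cnt_altc_even[of b y x k] by (simp add: add.commute)

lemma phi_alt:
  assumes hom: "\<phi> \<in> hom (artin_group S M) ((artin_group S M)\<lparr>carrier := H\<rparr>)"
    and sS: "s \<in> S" and tS: "t \<in> S"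
    and xs: "xs \<in> words S" "\<phi> (artin_class S M [(s, True)]) = artin_class S M xs"
    and xt: "xt \<in> words S" "\<phi> (artin_class S M [(t, True)]) = artin_class S M xt"
  shows "\<phi> (artin_class S M (alt_word s t (Suc n))) = artin_class S M (altc xs xt (Suc n))"
  using sS tS xs xt
proof (induction n arbitrary: s t xs xt)
  case 0 thus ?case by (simp add: alt_word_Suc alt_word_0)
next
  case (Suc n)
  have w: "alt_word t s (Suc n) \<in> words S" using Suc.prems by (simp add: alt_word_words)
  have "artin_class S M (alt_word s t (Suc (Suc n)))
      = artin_class S M [(s, True)] \<otimes>\<^bsub>artin_group S M\<^esub> artin_class S M (alt_word t s (Suc n))"
    using mult_class[of "[(s, True)]" S "alt_word t s (Suc n)" M] w Suc.prems
    by (simp add: alt_word_Suc[of s t "Suc n"])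
  hence "\<phi> (artin_class S M (alt_word s t (Suc (Suc n))))
      = \<phi> (artin_class S M [(s, True)]) \<otimes>\<^bsub>artin_group S M\<^esub> \<phi> (artin_class S M (alt_word t s (Suc n)))"
    using hom w Suc.prems unfolding hom_def by (auto simp: carrier_G)
  also have "\<dots> = artin_class S M xs \<otimes>\<^bsub>artin_group S M\<^esub> artin_class S M (altc xt xs (Suc n))"
    using Suc.IH[of t s xt xs] Suc.prems by simp
  also have "\<dots> = artin_class S M (altc xs xt (Suc (Suc n)))"
    using mult_class[of xs S "altc xt xs (Suc n)" M] Suc.prems altc_words[of xt S xs "Suc n"] by simp
  finally show ?case .
qed


lemma parity_of_pow: "(-1::real) ^ m = (-1) ^ n \<Longrightarrow> even m = even n"
  by (auto simp: minus_one_power_iff split: if_splits)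

theorem lemma3p2:
  fixes S :: "'a set" and M :: "'a \<Rightarrow> 'a \<Rightarrow> enat" and a b c :: 'a
  assumes "finite S" and "coxeter_matrix S M"
    and "parabolic_retractable S M"
    and "a \<in> S" and "b \<in> S" and "c \<in> S"
    and "a \<noteq> b" and "a \<noteq> c" and "b \<noteq> c"
    and "odd_entry (M a b)" and "odd_entry (M a c)"
  shows "odd_entry (M b c)"
proof (rule ccontr)
  assume nodd: "\<not> odd_entry (M b c)"
  note fin = assms(1) and cox = assms(2)
  have bS: "b \<in> S" and cS: "c \<in> S" and aS: "a \<in> S" using assms by auto
  have bcb0: "beta M b c = 0"
    using nodd by (cases "M b c") (auto simp: beta_def odd_entry_def)
  hence bcb: "beta M c b = 0" using beta_sym[OF cox bS cS] by simp
  let ?G = "artin_group S M"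
  let ?cl = "artin_class S M"
  define H where "H = parabolic S M {b, c}"
  have "{b, c} \<subseteq> S" using bS cS by auto
  hence "\<exists>\<phi>. retraction_onto ?G (parabolic S M {b, c}) \<phi>"
    using assms(3) unfolding parabolic_retractable_def by blast
  then obtain \<phi> where ret: "retraction_onto ?G H \<phi>" unfolding H_def by blast
  have hom: "\<phi> \<in> hom ?G (?G\<lparr>carrier := H\<rparr>)" and fx: "\<And>h. h \<in> H \<Longrightarrow> \<phi> h = h"
    using ret unfolding retraction_onto_def by auto
  have H_def': "H = generate ?G ((\<lambda>x. ?cl [(x, True)]) ` {b, c})"
    by (simp add: H_def parabolic_def)
  have BH: "?cl [(b, True)] \<in> H" unfolding H_def' by (rule generate.incl) auto
  have CH: "?cl [(c, True)] \<in> H" unfolding H_def' by (rule generate.incl) auto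
  have "?cl [(a, True)] \<in> carrier ?G" using aS by (simp add: carrier_G)
  hence "\<phi> (?cl [(a, True)]) \<in> H" using hom unfolding hom_def by auto
  then obtain x where x: "x \<in> lists ({b,c} \<times> UNIV)" "\<phi> (?cl [(a, True)]) = ?cl x"
    using gen_char[of "{b,c}" S _ M] bS cS unfolding H_def' by blast
  have xw: "x \<in> words S" using x(1) bS cS by (auto simp: words_def)
  define eb where "eb = (\<lambda>u. if u = b then (1::real) else 0)"
  have key: "even (cnt b (altc x [(d, True)] p)) = even (cnt b (altc [(d, True)] x p))"
    if dS: "d \<in> S" and dbc: "d = b \<or> d = c" and ad: "a \<noteq> d" and Mad: "M a d = enat p" and p1: "p \<ge> 1"
    for d p
  proof -
    have dH: "?cl [(d, True)] \<in> H" using dbc BH CH by auto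
    obtain p' where p': "p = Suc p'" using p1 by (cases p) auto
    have "artin_eq S M ([] @ alt_word a d p @ []) ([] @ alt_word d a p @ [])"
      by (rule artin_eq.braid) (auto simp: aS dS ad Mad)
    hence "?cl (alt_word a d p) = ?cl (alt_word d a p)"
      using alt_word_words[OF aS dS] by (simp add: class_eq_iff)
    hence "\<phi> (?cl (alt_word a d p)) = \<phi> (?cl (alt_word d a p))" by simp
    moreover have "\<phi> (?cl (alt_word a d p)) = ?cl (altc x [(d, True)] p)"
      unfolding p' by (rule phi_alt[OF hom aS dS xw x(2)]) (auto simp: dS fx[OF dH])
    moreover have "\<phi> (?cl (alt_word d a p)) = ?cl (altc [(d, True)] x p)"
      unfolding p' by (rule phi_alt[OF hom dS aS _ _ xw x(2)]) (auto simp: dS fx[OF dH])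
    ultimately have "?cl (altc x [(d, True)] p) = ?cl (altc [(d, True)] x p)" by simp
    hence "artin_eq S M (altc x [(d, True)] p) (altc [(d, True)] x p)"
      using altc_words[of x S "[(d, True)]" p] xw dS by (simp add: class_eq_iff)
    hence "Ev S M (altc x [(d, True)] p) eb = Ev S M (altc [(d, True)] x p) eb"
      using Ev_artin[OF _ fin cox] by blast
    moreover have l1: "altc x [(d, True)] p \<in> lists ({b,c} \<times> UNIV)"
      using x(1) dbc by (intro altc_lists) auto
    moreover have l2: "altc [(d, True)] x p \<in> lists ({b,c} \<times> UNIV)"
      using x(1) dbc by (intro altc_lists) auto
    ultimately have "(\<lambda>u. if u = b then (-1::real) ^ cnt b (altc x [(d, True)] p) else 0)
        = (\<lambda>u. if u = b then (-1) ^ cnt b (altc [(d, True)] x p) else 0)"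
      using Ev_b[OF _ bcb, of _ S] assms(9) unfolding eb_def by metis
    hence "(-1::real) ^ cnt b (altc x [(d, True)] p) = (-1) ^ cnt b (altc [(d, True)] x p)"
      by (metis (mono_tags))
    thus ?thesis by (rule parity_of_pow)
  qed
  obtain p where p: "M a b = enat p" "odd p" using assms(10) by (auto simp: odd_entry_def)
  obtain q where q: "M a c = enat q" "odd q" using assms(11) by (auto simp: odd_entry_def)
  obtain k where k: "p = 2*k+1" using p(2) oddE by blast
  obtain l where l: "q = 2*l+1" using q(2) oddE by blast
  have e1: "even (cnt b (altc x [(b, True)] p)) = even (cnt b (altc [(b, True)] x p))"
    using key[OF bS _ assms(7) p(1)] k by simp
  have e2: "even (cnt b (altc x [(c, True)] q)) = even (cnt b (altc [(c, True)] x q))"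
    using key[OF cS _ assms(8) q(1)] l by simp
  have c1: "cnt b [(b, True)] = 1" by (simp add: cnt_Cons)
  have c2: "cnt b [(c, True)] = 0" using assms(9) by (simp add: cnt_Cons)
  from e1 have "odd (cnt b x)" unfolding k cnt_altc_odd c1 by auto
  moreover from e2 have "even (cnt b x)" unfolding l cnt_altc_odd c2 by auto
  ultimately show False by simp
qed


end
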